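(* Let $G$, $z$, $g_1,\dots,g_{2r}$ be as in the context. Every element $g\in G\setminus\{1,z\}$ can be written as $g=z^{j}g_{s_1}g_{s_2}\cdots g_{s_t}$ with $j\in\{0,1\}$ and $1\le s_1<\dots<s_t\le 2r$, uniquely. For $\sigma\in S_{2r}$ define $\tilde\sigma:G\to G$ by $1^{\tilde\sigma}=1$, $z^{\tilde\sigma}=z$ and $(z^{j}g_{s_1}\cdots g_{s_t})^{\tilde\sigma}=z^{j}g_{s_1^{\sigma}}\cdots g_{s_t^{\sigma}}$. Then each $\tilde\sigma$ is an automorphism of $G$, and the map $\sigma\mapsto\tilde\sigma$ is an injective group homomorphism $S_{2r}\to\mathrm{Aut}(G)$; in particular $S_{2r}$ embeds in $\mathrm{Aut}(G)$ as a group of automorphisms permuting $\{g_1,\dots,g_{2r}\}$.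
   Context: Let $r\ge1$ and $G$ an extraspecial $2$-group of order $2^{2r+1}$ (i.e. $|Z(G)|=2$ and $G/Z(G)\cong\mathbb{Z}_2^{2r}$), with $Z=Z(G)=\langle z\rangle$. Identify $Z$ with $\mathbb{F}_2$ and view $G/Z$ as an $\mathbb{F}_2$-space with quadratic form $Q(Zx)=x^2$ and associated bilinear form $B(Zx,Zy)=[x,y]$. Assume $G/Z$ has a symmetric basis $\{Zg_1,\dots,Zg_{2r}\}$, i.e. $Q(Zg_i)=0$ for all $i$ and $B(Zg_i,Zg_j)=1$ for $i\ne j$; thus $g_i^2=1$ and $g_ig_j=g_jg_iz$ for $i\ne j$. Permutations act on the right. *)

theory Defs
  imports "HOL-Algebra.Algebra"
begin

definition gword :: "('a, 'b) monoid_scheme \<Rightarrow> 'a \<Rightarrow> (nat \<Rightarrow> 'a) \<Rightarrow> nat \<Rightarrow> nat list \<Rightarrow> 'a" where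
  "gword G z g j ss = z [^]\<^bsub>G\<^esub> j \<otimes>\<^bsub>G\<^esub> foldr (\<lambda>s acc. g s \<otimes>\<^bsub>G\<^esub> acc) ss \<one>\<^bsub>G\<^esub>"

definition gcenter :: "('a, 'b) monoid_scheme \<Rightarrow> 'a set" where
  "gcenter G = {x \<in> carrier G. \<forall>y \<in> carrier G. x \<otimes>\<^bsub>G\<^esub> y = y \<otimes>\<^bsub>G\<^esub> x}"

definition extraspecial2 :: "('a, 'b) monoid_scheme \<Rightarrow> nat \<Rightarrow> 'a \<Rightarrow> bool" where
  "extraspecial2 G r z \<longleftrightarrow> group G \<and> finite (carrier G) \<and> order G = 2 ^ (2 * r + 1)
     \<and> z \<in> carrier G \<and> z \<noteq> \<one>\<^bsub>G\<^esub> \<and> gcenter G = {\<one>\<^bsub>G\<^esub>, z}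
     \<and> comm_group (G Mod gcenter G)
     \<and> (\<forall>C \<in> carrier (G Mod gcenter G). C \<otimes>\<^bsub>(G Mod gcenter G)\<^esub> C = \<one>\<^bsub>(G Mod gcenter G)\<^esub>)"

text \<open>{Zg_1,...,Zg_2r} is a symmetric basis of G/Z: Q(Zg_i) = g_i^2 = 1 (identified with 0 in Z),
  B(Zg_i,Zg_j) = [g_i,g_j] = z for i \<noteq> j, i.e. g_i g_j = g_j g_i z; and the cosets form an
  F_2-basis of G/Z (spanning: G is generated by Z and the g_i; independence: no nonempty
  product of distinct g_i lies in Z).\<close>
definition symmetric_basis :: "('a, 'b) monoid_scheme \<Rightarrow> nat \<Rightarrow> 'a \<Rightarrow> (nat \<Rightarrow> 'a) \<Rightarrow> bool" where
  "symmetric_basis G r z g \<longleftrightarrow>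
     (\<forall>i \<in> {1..2*r}. g i \<in> carrier G \<and> g i \<otimes>\<^bsub>G\<^esub> g i = \<one>\<^bsub>G\<^esub>)
     \<and> (\<forall>i \<in> {1..2*r}. \<forall>j \<in> {1..2*r}. i \<noteq> j \<longrightarrow> g i \<otimes>\<^bsub>G\<^esub> g j = g j \<otimes>\<^bsub>G\<^esub> g i \<otimes>\<^bsub>G\<^esub> z)
     \<and> generate G (insert z (g ` {1..2*r})) = carrier G
     \<and> (\<forall>S \<subseteq> {1..2*r}. gword G z g 0 (sorted_list_of_set S) \<in> {\<one>\<^bsub>G\<^esub>, z} \<longrightarrow> S = {})"

definition nf :: "('a, 'b) monoid_scheme \<Rightarrow> nat \<Rightarrow> 'a \<Rightarrow> (nat \<Rightarrow> 'a) \<Rightarrow> 'a \<Rightarrow> nat \<times> nat set" where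
  "nf G r z g x = (THE p. fst p \<in> {0,1} \<and> snd p \<subseteq> {1..2*r}
                        \<and> x = gword G z g (fst p) (sorted_list_of_set (snd p)))"

text \<open>The map sigma-tilde (restricted to the carrier, as required for elements of AutoGroup G).\<close>
definition tilde :: "('a, 'b) monoid_scheme \<Rightarrow> nat \<Rightarrow> 'a \<Rightarrow> (nat \<Rightarrow> 'a) \<Rightarrow> (nat \<Rightarrow> nat) \<Rightarrow> 'a \<Rightarrow> 'a" where
  "tilde G r z g \<sigma> = (\<lambda>x \<in> carrier G.
      if x = \<one>\<^bsub>G\<^esub> then \<one>\<^bsub>G\<^esub>
      else if x = z then z
      else gword G z g (fst (nf G r z g x)) (map \<sigma> (sorted_list_of_set (snd (nf G r z g x)))))"

end

theory Submission
  imports Defs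
begin

lemma sl_ins:
  assumes "finite (S::nat set)" "a \<notin> S"
  shows "sorted_list_of_set (insert a S) =
     filter (\<lambda>s. s < a) (sorted_list_of_set S) @ a # filter (\<lambda>s. a < s) (sorted_list_of_set S)"
proof -
  let ?l = "sorted_list_of_set S"
  have ss: "sorted_wrt (<) ?l" by (simp add: strict_sorted_list_of_set)
  have "sorted_wrt (<) (filter (\<lambda>s. s < a) ?l @ a # filter (\<lambda>s. a < s) ?l)"
    using ss by (auto simp: sorted_wrt_append sorted_wrt_filter)
  moreover have "sorted_wrt (<) (sorted_list_of_set (insert a S))"
    by (simp add: strict_sorted_list_of_set)
  moreover have "set (filter (\<lambda>s. s < a) ?l @ a # filter (\<lambda>s. a < s) ?l) = insert a S"
    using assms by (auto simp: nat_neq_iff)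
  moreover have "set (sorted_list_of_set (insert a S)) = insert a S" using assms by (simp add: set_insort_key)
  ultimately show ?thesis using strict_sorted_equal by blast
qed

lemma sl_split:
  assumes "finite (S::nat set)" "a \<notin> S"
  shows "sorted_list_of_set S =
     filter (\<lambda>s. s < a) (sorted_list_of_set S) @ filter (\<lambda>s. a < s) (sorted_list_of_set S)"
proof -
  let ?l = "sorted_list_of_set S"
  have ss: "sorted_wrt (<) ?l" by (simp add: strict_sorted_list_of_set)
  have "sorted_wrt (<) (filter (\<lambda>s. s < a) ?l @ filter (\<lambda>s. a < s) ?l)"
    using ss by (auto simp: sorted_wrt_append sorted_wrt_filter)
  moreover have "\<And>x. x\<in>S \<Longrightarrow> x<a \<or> a<x" using assms by (metis linorder_neqE_nat)
  then have "set (filter (\<lambda>s. s < a) ?l @ filter (\<lambda>s. a < s) ?l) = set ?l"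
    using assms by auto
  ultimately show ?thesis using strict_sorted_equal ss by blast
qed

definition symd :: "nat list \<Rightarrow> nat set" where
  "symd L = foldr (\<lambda>a S. if a \<in> S then S - {a} else insert a S) L {}"

lemma symd_Nil[simp]: "symd [] = {}" by (simp add: symd_def)
lemma symd_Cons[simp]: "symd (a # L) = (if a \<in> symd L then symd L - {a} else insert a (symd L))"
  by (simp add: symd_def)
lemma symd_sub: "symd L \<subseteq> set L" by (induct L) auto
lemma symd_fin[simp]: "finite (symd L)" by (meson List.finite_set finite_subset symd_sub)
lemma symd_append: "symd (xs @ ys) = (symd xs - symd ys) \<union> (symd ys - symd xs)"
  by (induct xs) auto
lemma symd_distinct: "distinct xs \<Longrightarrow> symd xs = set xs"
  by (induct xs) auto

locale esg = group G for G (structure) +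
  fixes R :: "nat set" and z and g
  assumes finR: "finite R"
  and z_c: "z \<in> carrier G" and z_ne: "z \<noteq> \<one>"
  and z_cent: "x \<in> carrier G \<Longrightarrow> z \<otimes> x = x \<otimes> z" and zz: "z \<otimes> z = \<one>"
  and g_c: "a \<in> R \<Longrightarrow> g a \<in> carrier G" and gg: "a \<in> R \<Longrightarrow> g a \<otimes> g a = \<one>"
  and gcomm: "a \<in> R \<Longrightarrow> b \<in> R \<Longrightarrow> a \<noteq> b \<Longrightarrow> g a \<otimes> g b = g b \<otimes> g a \<otimes> z"
  and indep: "S \<subseteq> R \<Longrightarrow> gword G z g 0 (sorted_list_of_set S) \<in> {\<one>, z} \<Longrightarrow> S = {}"
  and cardG: "card (carrier G) = 2 * 2 ^ card R"
  and finG: "finite (carrier G)"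
  fixes r :: nat assumes R_eq: "R = {1..2*r}"
begin

abbreviation P where "P L \<equiv> foldr (\<lambda>s acc. g s \<otimes> acc) L \<one>"
abbreviation W where "W j L \<equiv> gword G z g j L"

lemma W_def: "W j L = z [^] (j::nat) \<otimes> P L" by (simp add: gword_def)

lemma zp_c[simp]: "z [^] (n::nat) \<in> carrier G" using z_c by simp

lemma zp_cent: "x \<in> carrier G \<Longrightarrow> z [^] (n::nat) \<otimes> x = x \<otimes> z [^] n"
proof (induct n)
  case 0 then show ?case by simp
next
  case (Suc n)
  have "z [^] Suc n \<otimes> x = z [^] n \<otimes> (z \<otimes> x)" using Suc z_c by (simp add: m_assoc)
  also have "\<dots> = z [^] n \<otimes> (x \<otimes> z)" using Suc z_cent by simp
  also have "\<dots> = (z [^] n \<otimes> x) \<otimes> z" using Suc.prems z_c by (simp add: m_assoc)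
  also have "\<dots> = (x \<otimes> z [^] n) \<otimes> z" by (simp only: Suc.hyps[OF Suc.prems])
  also have "\<dots> = x \<otimes> z [^] Suc n" using Suc.prems z_c by (simp add: m_assoc)
  finally show ?case .
qed

lemma zp_eval: "z [^] (n::nat) = (if even n then \<one> else z)"
  by (induct n) (auto simp: z_c zz)

lemma zp_add: "z [^] (m + n::nat) = z [^] m \<otimes> z [^] n"
  using z_c by (simp add: nat_pow_mult)

lemma zp_mod: "z [^] (n mod 2) = z [^] (n::nat)"
  by (simp add: zp_eval)

lemma P_c: "set L \<subseteq> R \<Longrightarrow> P L \<in> carrier G"
  by (induct L) (auto simp: g_c)

lemma W_c: "set L \<subseteq> R \<Longrightarrow> W j L \<in> carrier G"
  by (simp add: W_def P_c)

lemma P_append: "set xs \<subseteq> R \<Longrightarrow> set ys \<subseteq> R \<Longrightarrow> P (xs @ ys) = P xs \<otimes> P ys"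
  by (induct xs) (auto simp: m_assoc g_c P_c)

lemma W_mult: "set L \<subseteq> R \<Longrightarrow> set M \<subseteq> R \<Longrightarrow> W j L \<otimes> W k M = W (j + k) (L @ M)"
proof -
  assume L: "set L \<subseteq> R" and M: "set M \<subseteq> R"
  have "W j L \<otimes> W k M = z [^] j \<otimes> (P L \<otimes> z [^] k) \<otimes> P M"
    using L M by (simp add: W_def m_assoc P_c)
  also have "\<dots> = z [^] j \<otimes> (z [^] k \<otimes> P L) \<otimes> P M" using zp_cent[of "P L" k] L P_c by simp
  also have "\<dots> = (z [^] j \<otimes> z [^] k) \<otimes> (P L \<otimes> P M)"
    using L M by (simp add: m_assoc P_c)
  also have "\<dots> = W (j + k) (L @ M)"
    using L M by (simp only: W_def P_append zp_add)
  finally show ?thesis .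
qed

lemma comm_P:
  "a \<in> R \<Longrightarrow> set xs \<subseteq> R \<Longrightarrow> a \<notin> set xs \<Longrightarrow> g a \<otimes> P xs = z [^] length xs \<otimes> (P xs \<otimes> g a)"
proof (induct xs)
  case Nil then show ?case by (simp add: g_c)
next
  case (Cons x xs)
  have x: "x \<in> R" "x \<noteq> a" and xs: "set xs \<subseteq> R" using Cons by auto
  have IH: "g a \<otimes> P xs = z [^] length xs \<otimes> (P xs \<otimes> g a)" using Cons by auto
  have "g a \<otimes> P (x # xs) = (g a \<otimes> g x) \<otimes> P xs" using x xs Cons by (simp add: m_assoc g_c P_c)
  also have "\<dots> = g x \<otimes> (g a \<otimes> z) \<otimes> P xs" using gcomm[of a x] x Cons by (simp add: m_assoc g_c z_c)
  also have "\<dots> = g x \<otimes> (z \<otimes> g a) \<otimes> P xs" using x xs Cons z_cent[of "g a"] by (simp add: g_c)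
  also have "\<dots> = g x \<otimes> (z \<otimes> (g a \<otimes> P xs))" using x xs Cons by (simp add: m_assoc g_c z_c P_c)
  also have "\<dots> = g x \<otimes> (z \<otimes> (z [^] length xs \<otimes> (P xs \<otimes> g a)))" using IH by simp
  also have "\<dots> = g x \<otimes> ((z \<otimes> z [^] length xs) \<otimes> (P xs \<otimes> g a))"
    using x xs Cons z_c by (simp add: m_assoc g_c P_c)
  also have "\<dots> = g x \<otimes> ((z [^] length xs \<otimes> z) \<otimes> (P xs \<otimes> g a))"
    using zp_cent[OF z_c, of "length xs"] by simp
  also have "\<dots> = (g x \<otimes> z [^] Suc (length xs)) \<otimes> (P xs \<otimes> g a)"
    using x xs Cons z_c by (simp add: m_assoc g_c P_c)
  also have "\<dots> = (z [^] Suc (length xs) \<otimes> g x) \<otimes> (P xs \<otimes> g a)"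
    using zp_cent[of "g x" "Suc (length xs)"] x g_c by simp
  also have "\<dots> = z [^] length (x # xs) \<otimes> (P (x # xs) \<otimes> g a)"
    using x xs Cons z_c by (simp add: m_assoc g_c P_c del: nat_pow_Suc)
  finally show ?case .
qed

lemma ins_P:
  assumes "a \<in> R" "set xs \<subseteq> R" "set ys \<subseteq> R" "a \<notin> set xs"
  shows "g a \<otimes> P (xs @ ys) = z [^] length xs \<otimes> P (xs @ a # ys)"
proof -
  have "g a \<otimes> P (xs @ ys) = (g a \<otimes> P xs) \<otimes> P ys"
    using assms by (simp only: P_append) (simp add: m_assoc g_c P_c)
  also have "\<dots> = (z [^] length xs \<otimes> (P xs \<otimes> g a)) \<otimes> P ys" using comm_P assms by simp
  also have "\<dots> = z [^] length xs \<otimes> (P xs \<otimes> P (a # ys))"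
    using assms by (simp add: m_assoc g_c P_c)
  also have "P xs \<otimes> P (a # ys) = P (xs @ a # ys)" by (rule P_append[symmetric]) (use assms in auto)
  finally show ?thesis .
qed

lemma del_P:
  assumes "a \<in> R" "set xs \<subseteq> R" "set ys \<subseteq> R" "a \<notin> set xs"
  shows "g a \<otimes> P (xs @ a # ys) = z [^] length xs \<otimes> P (xs @ ys)"
proof -
  have pa: "P (xs @ a # ys) = P xs \<otimes> P (a # ys)" by (rule P_append) (use assms in auto)
  have "g a \<otimes> P (xs @ a # ys) = (g a \<otimes> P xs) \<otimes> (g a \<otimes> P ys)"
    unfolding pa using assms by (simp add: m_assoc g_c P_c)
  also have "\<dots> = (z [^] length xs \<otimes> (P xs \<otimes> g a)) \<otimes> (g a \<otimes> P ys)" using comm_P assms by simp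
  also have "\<dots> = z [^] length xs \<otimes> (P xs \<otimes> (g a \<otimes> g a) \<otimes> P ys)"
    using assms by (simp add: m_assoc g_c P_c)
  also have "\<dots> = z [^] length xs \<otimes> (P xs \<otimes> P ys)"
    using assms by (simp add: gg P_c)
  also have "P xs \<otimes> P ys = P (xs @ ys)" by (rule P_append[symmetric]) (use assms in auto)
  finally show ?thesis .
qed

lemma W_Cons: "a \<in> R \<Longrightarrow> set L \<subseteq> R \<Longrightarrow> W j (a # L) = g a \<otimes> W j L"
proof -
  assume a: "a \<in> R" and L: "set L \<subseteq> R"
  have "W j (a # L) = (z [^] j \<otimes> g a) \<otimes> P L" using a L by (simp add: W_def m_assoc g_c P_c)
  also have "\<dots> = (g a \<otimes> z [^] j) \<otimes> P L" using zp_cent[of "g a" j] a g_c by simp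
  also have "\<dots> = g a \<otimes> W j L" using a L by (simp add: W_def m_assoc g_c P_c)
  finally show ?thesis .
qed

lemma W_step:
  assumes "a \<in> R" "set M \<subseteq> R" "set M' \<subseteq> R" "g a \<otimes> P M = z [^] n \<otimes> P M'"
  shows "g a \<otimes> W e M = W (e + n) M'"
proof -
  have "g a \<otimes> W e M = (g a \<otimes> z [^] e) \<otimes> P M" using assms by (simp add: W_def m_assoc g_c P_c)
  also have "\<dots> = (z [^] e \<otimes> g a) \<otimes> P M" using zp_cent[of "g a" e] assms g_c by simp
  also have "\<dots> = z [^] e \<otimes> (z [^] n \<otimes> P M')" using assms by (simp add: m_assoc g_c P_c)
  also have "\<dots> = W (e + n) M'" using assms by (simp add: W_def m_assoc P_c zp_add)
  finally show ?thesis .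
qed

lemma normA:
  assumes inj: "inj_on \<sigma> R" and sR: "\<sigma> ` R \<subseteq> R"
  shows "set L \<subseteq> R \<Longrightarrow> \<exists>e. W j L = W e (sorted_list_of_set (symd L))
            \<and> W j (map \<sigma> L) = W e (map \<sigma> (sorted_list_of_set (symd L)))"
proof (induct L)
  case Nil then show ?case by auto
next
  case (Cons a L)
  have a: "a \<in> R" and L: "set L \<subseteq> R" using Cons by auto
  have \<sigma>a: "\<sigma> a \<in> R" using a sR by auto
  have mL: "set (map \<sigma> L) \<subseteq> R" using L sR by auto
  obtain e where e1: "W j L = W e (sorted_list_of_set (symd L))"
     and e2: "W j (map \<sigma> L) = W e (map \<sigma> (sorted_list_of_set (symd L)))" using Cons L by blast
  define S where "S = symd L"
  have SR: "S \<subseteq> R" using symd_sub L S_def by blast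
  show ?case
  proof (cases "a \<in> S")
    case True
    define S0 where "S0 = S - {a}"
    have f0: "finite S0" "a \<notin> S0" using S0_def S_def by auto
    define xs where "xs = filter (\<lambda>s. s < a) (sorted_list_of_set S0)"
    define ys where "ys = filter (\<lambda>s. a < s) (sorted_list_of_set S0)"
    have S0R: "S0 \<subseteq> R" using SR S0_def by auto
    have xsR: "set xs \<subseteq> R" "set ys \<subseteq> R" using S0R f0 by (auto simp: xs_def ys_def)
    have axs: "a \<notin> set xs" by (auto simp: xs_def)
    have ins: "S = insert a S0" using True S0_def by auto
    have sS: "sorted_list_of_set S = xs @ a # ys" using sl_ins[OF f0] ins xs_def ys_def by simp
    have sd: "symd (a # L) = S0" using True S_def S0_def by simp
    have sS0: "sorted_list_of_set S0 = xs @ ys" using sl_split[OF f0] xs_def ys_def by simp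
    have m1: "set (map \<sigma> xs) \<subseteq> R" "set (map \<sigma> ys) \<subseteq> R" using xsR sR by auto
    have m2: "\<sigma> a \<notin> set (map \<sigma> xs)" using axs xsR a inj by (auto simp: inj_on_def)
    have "W j (a # L) = W (e + length xs) (sorted_list_of_set (symd (a # L)))"
      using W_Cons[OF a L] e1 S_def sS sd sS0 W_step[OF a _ _ del_P[OF a xsR axs]] xsR a by simp
    moreover have "W j (map \<sigma> (a # L)) = W (e + length xs) (map \<sigma> (sorted_list_of_set (symd (a # L))))"
      using W_Cons[OF \<sigma>a mL] e2 S_def sS sd sS0 W_step[OF \<sigma>a _ _ del_P[OF \<sigma>a m1 m2]] m1 \<sigma>a by simp
    ultimately show ?thesis by blast
  next
    case False
    have f0: "finite S" "a \<notin> S" using False S_def by auto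
    define xs where "xs = filter (\<lambda>s. s < a) (sorted_list_of_set S)"
    define ys where "ys = filter (\<lambda>s. a < s) (sorted_list_of_set S)"
    have xsR: "set xs \<subseteq> R" "set ys \<subseteq> R" using SR f0 by (auto simp: xs_def ys_def)
    have axs: "a \<notin> set xs" by (auto simp: xs_def)
    have sd: "symd (a # L) = insert a S" using False S_def by simp
    have sS: "sorted_list_of_set (insert a S) = xs @ a # ys" using sl_ins[OF f0] xs_def ys_def by simp
    have sS0: "sorted_list_of_set S = xs @ ys" using sl_split[OF f0] xs_def ys_def by simp
    have m1: "set (map \<sigma> xs) \<subseteq> R" "set (map \<sigma> ys) \<subseteq> R" using xsR sR by auto
    have m2: "\<sigma> a \<notin> set (map \<sigma> xs)" using axs xsR a inj by (auto simp: inj_on_def)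
    have "W j (a # L) = W (e + length xs) (sorted_list_of_set (symd (a # L)))"
      using W_Cons[OF a L] e1 S_def sS sd sS0 W_step[OF a _ _ ins_P[OF a xsR axs]] xsR a by simp
    moreover have "W j (map \<sigma> (a # L)) = W (e + length xs) (map \<sigma> (sorted_list_of_set (symd (a # L))))"
      using W_Cons[OF \<sigma>a mL] e2 S_def sS sd sS0 W_step[OF \<sigma>a _ _ ins_P[OF \<sigma>a m1 m2]] m1 \<sigma>a by simp
    ultimately show ?thesis by blast
  qed
qed

lemma W0: "set L \<subseteq> R \<Longrightarrow> W 0 L = P L" by (simp add: W_def P_c)

lemma sl_R: "S \<subseteq> R \<Longrightarrow> set (sorted_list_of_set S) \<subseteq> R"
  using finR by (simp add: finite_subset)

lemma PP: assumes "T \<subseteq> R" shows "\<exists>e. P (sorted_list_of_set T) \<otimes> P (sorted_list_of_set T) = z [^] (e::nat)"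
proof -
  have fT: "finite T" using assms finR finite_subset by blast
  obtain e where "W 0 (sorted_list_of_set T @ sorted_list_of_set T)
       = W e (sorted_list_of_set (symd (sorted_list_of_set T @ sorted_list_of_set T)))"
    using normA[of id "sorted_list_of_set T @ sorted_list_of_set T" 0] sl_R[OF assms] by auto
  moreover have "symd (sorted_list_of_set T @ sorted_list_of_set T) = {}"
    by (simp add: symd_append)
  moreover have "W 0 (sorted_list_of_set T @ sorted_list_of_set T) = P (sorted_list_of_set T) \<otimes> P (sorted_list_of_set T)"
    using W_mult[of "sorted_list_of_set T" "sorted_list_of_set T" 0 0] sl_R[OF assms] by (simp add: W0)
  ultimately have "P (sorted_list_of_set T) \<otimes> P (sorted_list_of_set T) = z [^] e" by (simp add: W_def)
  then show ?thesis by blast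
qed

lemma PS: assumes "S \<subseteq> R" "T \<subseteq> R"
  shows "\<exists>e. P (sorted_list_of_set S) \<otimes> P (sorted_list_of_set T) = z [^] (e::nat) \<otimes> P (sorted_list_of_set ((S - T) \<union> (T - S)))"
proof -
  have fT: "finite T" "finite S" using assms finR finite_subset by auto
  obtain e where "W 0 (sorted_list_of_set S @ sorted_list_of_set T)
       = W e (sorted_list_of_set (symd (sorted_list_of_set S @ sorted_list_of_set T)))"
    using normA[of id "sorted_list_of_set S @ sorted_list_of_set T" 0] sl_R[OF assms(1)] sl_R[OF assms(2)] by auto
  moreover have "symd (sorted_list_of_set S @ sorted_list_of_set T) = (S - T) \<union> (T - S)"
    using fT by (simp add: symd_append symd_distinct)
  moreover have "W 0 (sorted_list_of_set S @ sorted_list_of_set T) = P (sorted_list_of_set S) \<otimes> P (sorted_list_of_set T)"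
    using W_mult[of "sorted_list_of_set S" "sorted_list_of_set T" 0 0] sl_R[OF assms(1)] sl_R[OF assms(2)] by (simp add: W0)
  ultimately have "P (sorted_list_of_set S) \<otimes> P (sorted_list_of_set T) = z [^] e \<otimes> P (sorted_list_of_set ((S - T) \<union> (T - S)))"
    by (simp add: W_def)
  then show ?thesis by blast
qed

lemma zp_01: "z [^] (n::nat) \<in> {\<one>, z}" by (simp add: zp_eval)

lemma coord_inj:
  assumes j: "j \<in> {0,1}" and k: "k \<in> {0,1}" and S: "S \<subseteq> R" and T: "T \<subseteq> R"
    and eq: "W j (sorted_list_of_set S) = W k (sorted_list_of_set T)"
  shows "j = k \<and> S = T"
proof -
  define A where "A = P (sorted_list_of_set S)"
  define B where "B = P (sorted_list_of_set T)"
  have A: "A \<in> carrier G" and B: "B \<in> carrier G" using A_def B_def P_c sl_R S T by auto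
  obtain e :: nat where e: "B \<otimes> B = z [^] e" using PP[OF T] unfolding B_def by blast
  obtain e' :: nat where e': "A \<otimes> B = z [^] e' \<otimes> P (sorted_list_of_set ((S - T) \<union> (T - S)))"
    using PS[OF S T] A_def B_def by auto
  have DR: "(S - T) \<union> (T - S) \<subseteq> R" using S T by auto
  have D: "P (sorted_list_of_set ((S - T) \<union> (T - S))) \<in> carrier G" using P_c sl_R[OF DR] by auto
  have eq2: "z [^] j \<otimes> A = z [^] k \<otimes> B" using eq by (simp add: W_def A_def B_def)
  have "A = z [^] (j + j) \<otimes> A" using A by (simp add: zp_eval)
  also have "\<dots> = z [^] j \<otimes> (z [^] j \<otimes> A)" using A by (simp add: zp_add m_assoc)
  also have "\<dots> = z [^] (j + k) \<otimes> B" using eq2 B by (simp add: zp_add m_assoc)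
  finally have AB: "A = z [^] (j + k) \<otimes> B" .
  have "z [^] e' \<otimes> P (sorted_list_of_set ((S - T) \<union> (T - S))) = z [^] (j + k + e)"
    using e' AB e B by (simp add: m_assoc zp_add)
  then have "z [^] e' \<otimes> (z [^] e' \<otimes> P (sorted_list_of_set ((S - T) \<union> (T - S)))) = z [^] (e' + (j + k + e))"
    by (simp add: zp_add)
  then have "P (sorted_list_of_set ((S - T) \<union> (T - S))) = z [^] (e' + (j + k + e))"
    using D by (simp add: m_assoc[symmetric] zp_add[symmetric] zp_eval[of "e' + e'"])
  then have "W 0 (sorted_list_of_set ((S - T) \<union> (T - S))) \<in> {\<one>, z}"
    using zp_01 sl_R[OF DR] by (simp add: W0)
  then have "(S - T) \<union> (T - S) = {}" using indep DR by blast
  then have ST: "S = T" by auto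
  then have "z [^] j \<otimes> A = z [^] k \<otimes> A" using eq2 A_def B_def by simp
  then have "z [^] j = z [^] k" using A by (simp add: r_cancel)
  then show ?thesis using j k z_ne ST by (auto simp: zp_eval)
qed

lemma surj_coords:
  assumes x: "x \<in> carrier G"
  shows "\<exists>j S. j \<in> {0,1} \<and> S \<subseteq> R \<and> x = W j (sorted_list_of_set S)"
proof -
  let ?f = "\<lambda>p. W (fst p) (sorted_list_of_set (snd p))"
  let ?D = "{0::nat,1} \<times> Pow R"
  have inj: "inj_on ?f ?D"
  proof (rule inj_onI)
    fix p q assume "p \<in> ?D" "q \<in> ?D" "?f p = ?f q"
    then have "fst p = fst q \<and> snd p = snd q" by (intro coord_inj) auto
    then show "p = q" by (simp add: prod_eq_iff)
  qed
  have sub: "?f ` ?D \<subseteq> carrier G" using W_c sl_R by auto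
  have "card (?f ` ?D) = card ?D" using card_image[OF inj] .
  also have "\<dots> = 2 * 2 ^ card R" using finR by (simp add: card_cartesian_product card_Pow)
  finally have "card (?f ` ?D) = card (carrier G)" using cardG by simp
  then have "?f ` ?D = carrier G" using card_subset_eq[OF finG sub] by simp
  then have "x \<in> ?f ` ?D" using x by simp
  then obtain p where p: "p \<in> ?D" and px: "x = ?f p" by (rule imageE)
  have "fst p \<in> {0,1}" "snd p \<subseteq> R" using p by (auto simp: mem_Times_iff)
  then show ?thesis using px by blast
qed

lemma nf_unique:
  assumes x: "x \<in> carrier G"
  shows "\<exists>!p. fst p \<in> {0,1} \<and> snd p \<subseteq> {1..2*r} \<and> x = W (fst p) (sorted_list_of_set (snd p))"
proof -
  obtain j S where "j \<in> {0,1}" "S \<subseteq> R" "x = W j (sorted_list_of_set S)" using surj_coords[OF x] by blast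
  note jS = this
  show ?thesis unfolding R_eq[symmetric]
  proof (rule ex1I[of _ "(j,S)"])
    show "fst (j, S) \<in> {0, 1} \<and> snd (j, S) \<subseteq> R \<and> x = W (fst (j, S)) (sorted_list_of_set (snd (j, S)))"
      using jS by simp
  next
    fix p assume p: "fst p \<in> {0, 1} \<and> snd p \<subseteq> R \<and> x = W (fst p) (sorted_list_of_set (snd p))"
    then have eq: "W (fst p) (sorted_list_of_set (snd p)) = W j (sorted_list_of_set S)" using jS by simp
    have "fst p = j \<and> snd p = S" by (rule coord_inj[OF _ _ _ _ eq]) (use p jS in auto)
    then show "p = (j, S)" by (cases p) auto
  qed
qed

lemma nf_eq:
  assumes "j \<in> {0,1}" "S \<subseteq> R"
  shows "nf G r z g (W j (sorted_list_of_set S)) = (j, S)"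
proof -
  have x: "W j (sorted_list_of_set S) \<in> carrier G" using W_c sl_R assms by auto
  show ?thesis unfolding nf_def
    by (rule the1_equality[OF nf_unique[OF x]]) (use assms R_eq in auto)
qed

lemma W_one: "W 0 (sorted_list_of_set {}) = \<one>" by (simp add: W_def)
lemma W_z: "W 1 (sorted_list_of_set {}) = z" by (simp add: W_def z_c)

lemma perm_facts: "\<sigma> permutes R \<Longrightarrow> inj_on \<sigma> R \<and> \<sigma> ` R \<subseteq> R"
  by (simp add: permutes_inj_on permutes_image)

lemma tildeT:
  assumes \<sigma>: "\<sigma> permutes R" and j: "j \<in> {0,1}" and S: "S \<subseteq> R"
  shows "tilde G r z g \<sigma> (W j (sorted_list_of_set S)) = W j (map \<sigma> (sorted_list_of_set S))"
proof -
  have x: "W j (sorted_list_of_set S) \<in> carrier G" using W_c sl_R S by auto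
  consider "W j (sorted_list_of_set S) = \<one>" | "W j (sorted_list_of_set S) = z"
    | "W j (sorted_list_of_set S) \<noteq> \<one>" "W j (sorted_list_of_set S) \<noteq> z" by blast
  then show ?thesis
  proof cases
    case 1
    then have "j = 0 \<and> S = {}" using coord_inj[OF j _ S, of 0 "{}"] W_one by auto
    then show ?thesis using 1 x by (simp add: tilde_def W_def)
  next
    case 2
    then have "j = 1 \<and> S = {}" using coord_inj[OF j _ S, of 1 "{}"] W_z by auto
    then show ?thesis using 2 x z_ne by (simp add: tilde_def W_def z_c)
  next
    case 3
    then show ?thesis using x nf_eq[OF j S] by (simp add: tilde_def)
  qed
qed

lemma tildeC:
  assumes \<sigma>: "\<sigma> permutes R" and L: "set L \<subseteq> R"
  shows "tilde G r z g \<sigma> (W j L) = W j (map \<sigma> L)"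
proof -
  obtain e where e1: "W j L = W e (sorted_list_of_set (symd L))"
     and e2: "W j (map \<sigma> L) = W e (map \<sigma> (sorted_list_of_set (symd L)))"
    using normA[OF _ _ L, of \<sigma> j] perm_facts[OF \<sigma>] by blast
  have D: "symd L \<subseteq> R" using symd_sub L by blast
  have "W j L = W (e mod 2) (sorted_list_of_set (symd L))" using e1 by (simp add: W_def zp_mod)
  then have "tilde G r z g \<sigma> (W j L) = W (e mod 2) (map \<sigma> (sorted_list_of_set (symd L)))"
    using tildeT[OF \<sigma> _ D, of "e mod 2"] by (simp add: mod2_eq_if)
  also have "\<dots> = W j (map \<sigma> L)" using e2 by (simp add: W_def zp_mod)
  finally show ?thesis .
qed

lemma mapR: "\<sigma> permutes R \<Longrightarrow> set L \<subseteq> R \<Longrightarrow> set (map \<sigma> L) \<subseteq> R"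
  using perm_facts by auto

lemma tilde_c: assumes \<sigma>: "\<sigma> permutes R" and x: "x \<in> carrier G" shows "tilde G r z g \<sigma> x \<in> carrier G"
proof -
  obtain j S where S: "j \<in> {0,1}" "S \<subseteq> R" "x = W j (sorted_list_of_set S)" using surj_coords[OF x] by blast
  then have "tilde G r z g \<sigma> x = W j (map \<sigma> (sorted_list_of_set S))" using tildeT[OF \<sigma>] by simp
  then show ?thesis using W_c mapR[OF \<sigma> sl_R[OF S(2)]] by simp
qed

lemma tilde_mult:
  assumes \<sigma>: "\<sigma> permutes R" and x: "x \<in> carrier G" and y: "y \<in> carrier G"
  shows "tilde G r z g \<sigma> (x \<otimes> y) = tilde G r z g \<sigma> x \<otimes> tilde G r z g \<sigma> y"
proof -
  obtain j S where S: "S \<subseteq> R" "x = W j (sorted_list_of_set S)" using surj_coords[OF x] by blast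
  obtain k T where T: "T \<subseteq> R" "y = W k (sorted_list_of_set T)" using surj_coords[OF y] by blast
  have l: "set (sorted_list_of_set S) \<subseteq> R" "set (sorted_list_of_set T) \<subseteq> R" using S T sl_R by auto
  have "tilde G r z g \<sigma> (x \<otimes> y) = tilde G r z g \<sigma> (W (j + k) (sorted_list_of_set S @ sorted_list_of_set T))"
    using S T W_mult l by simp
  also have "\<dots> = W (j + k) (map \<sigma> (sorted_list_of_set S @ sorted_list_of_set T))"
    using tildeC[OF \<sigma>] l by simp
  also have "\<dots> = W j (map \<sigma> (sorted_list_of_set S)) \<otimes> W k (map \<sigma> (sorted_list_of_set T))"
    using W_mult[OF mapR[OF \<sigma> l(1)] mapR[OF \<sigma> l(2)]] by simp
  also have "\<dots> = tilde G r z g \<sigma> x \<otimes> tilde G r z g \<sigma> y" using tildeC[OF \<sigma>] l S T by simp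
  finally show ?thesis .
qed

lemma tilde_comp:
  assumes \<sigma>: "\<sigma> permutes R" and \<tau>: "\<tau> permutes R" and x: "x \<in> carrier G"
  shows "tilde G r z g \<tau> (tilde G r z g \<sigma> x) = tilde G r z g (\<tau> \<circ> \<sigma>) x"
proof -
  obtain j S where S: "S \<subseteq> R" "x = W j (sorted_list_of_set S)" using surj_coords[OF x] by blast
  have l: "set (sorted_list_of_set S) \<subseteq> R" using S sl_R by auto
  have ts: "(\<tau> \<circ> \<sigma>) permutes R" using \<sigma> \<tau> by (simp add: permutes_compose)
  show ?thesis using tildeC[OF \<sigma> l] tildeC[OF \<tau> mapR[OF \<sigma> l]] tildeC[OF ts l] S by simp
qed

lemma tilde_id: assumes x: "x \<in> carrier G" shows "tilde G r z g id x = x"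
proof -
  obtain j S where S: "j \<in> {0,1}" "S \<subseteq> R" "x = W j (sorted_list_of_set S)" using surj_coords[OF x] by blast
  then show ?thesis using tildeC[OF permutes_id sl_R[OF S(2)], of j] by simp
qed

lemma tilde_ext: "x \<notin> carrier G \<Longrightarrow> tilde G r z g \<sigma> x = undefined"
  by (simp add: tilde_def)

lemma tilde_auto: assumes \<sigma>: "\<sigma> permutes R" shows "tilde G r z g \<sigma> \<in> auto G"
proof -
  have h: "tilde G r z g \<sigma> \<in> hom G G"
    by (rule homI) (use tilde_c[OF \<sigma>] tilde_mult[OF \<sigma>] in auto)
  have iv: "Hilbert_Choice.inv \<sigma> permutes R" using \<sigma> by (simp add: permutes_inv)
  have "bij_betw (tilde G r z g \<sigma>) (carrier G) (carrier G)"
    apply (rule bij_betw_byWitness[where f'="tilde G r z g (Hilbert_Choice.inv \<sigma>)"])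
    using tilde_comp[OF \<sigma> iv] tilde_comp[OF iv \<sigma>] tilde_id tilde_c[OF \<sigma>] tilde_c[OF iv]
      permutes_inv_o[OF \<sigma>] by (simp_all add: image_subset_iff)
  moreover have "tilde G r z g \<sigma> \<in> extensional (carrier G)" by (simp add: tilde_def)
  ultimately show ?thesis using h by (simp add: auto_def Bij_def)
qed

lemma tilde_g: assumes \<sigma>: "\<sigma> permutes R" and i: "i \<in> R" shows "tilde G r z g \<sigma> (g i) = g (\<sigma> i)"
proof -
  have "\<sigma> i \<in> R" using perm_facts[OF \<sigma>] i by auto
  then show ?thesis using tildeC[OF \<sigma>, of "[i]" 0] i g_c by (simp add: W_def)
qed

lemma g_inj: assumes "a \<in> R" "b \<in> R" "g a = g b" shows "a = b"
proof (rule ccontr)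
  assume "a \<noteq> b"
  then have "g a \<otimes> g b = g b \<otimes> g a \<otimes> z" using gcomm assms by blast
  then have "\<one> = z" using assms gg z_c by simp
  then show False using z_ne by simp
qed

lemma tilde_hom: "tilde G r z g \<in> hom (sym_group (2*r)) (AutoGroup G)"
proof (rule homI)
  fix \<sigma> assume "\<sigma> \<in> carrier (sym_group (2*r))"
  then have "\<sigma> permutes R" by (simp add: sym_group_def R_eq)
  then show "tilde G r z g \<sigma> \<in> carrier (AutoGroup G)" using tilde_auto by (simp add: AutoGroup_def BijGroup_def)
next
  fix \<sigma> \<tau> assume "\<sigma> \<in> carrier (sym_group (2*r))" "\<tau> \<in> carrier (sym_group (2*r))"
  then have s: "\<sigma> permutes R" and t: "\<tau> permutes R" by (simp_all add: sym_group_def R_eq)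
  have B: "tilde G r z g \<sigma> \<in> Bij (carrier G)" "tilde G r z g \<tau> \<in> Bij (carrier G)"
    using tilde_auto[OF s] tilde_auto[OF t] by (auto simp: auto_def)
  have "tilde G r z g (\<sigma> \<circ> \<tau>) = compose (carrier G) (tilde G r z g \<sigma>) (tilde G r z g \<tau>)"
  proof
    fix x show "tilde G r z g (\<sigma> \<circ> \<tau>) x = compose (carrier G) (tilde G r z g \<sigma>) (tilde G r z g \<tau>) x"
      using tilde_comp[OF t s] by (cases "x \<in> carrier G") (auto simp: compose_def tilde_ext)
  qed
  then show "tilde G r z g (\<sigma> \<otimes>\<^bsub>sym_group (2 * r)\<^esub> \<tau>) =
      tilde G r z g \<sigma> \<otimes>\<^bsub>AutoGroup G\<^esub> tilde G r z g \<tau>"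
    using B by (simp add: sym_group_def AutoGroup_def BijGroup_def)
qed

lemma tilde_inj: "inj_on (tilde G r z g) (carrier (sym_group (2*r)))"
proof (rule inj_onI)
  fix \<sigma> \<tau> assume "\<sigma> \<in> carrier (sym_group (2*r))" "\<tau> \<in> carrier (sym_group (2*r))"
    and eq: "tilde G r z g \<sigma> = tilde G r z g \<tau>"
  then have s: "\<sigma> permutes R" and t: "\<tau> permutes R" by (simp_all add: sym_group_def R_eq)
  show "\<sigma> = \<tau>"
  proof
    fix i show "\<sigma> i = \<tau> i"
    proof (cases "i \<in> R")
      case True
      then have "g (\<sigma> i) = g (\<tau> i)" using tilde_g[OF s True] tilde_g[OF t True] eq by simp
      then show ?thesis using g_inj perm_facts[OF s] perm_facts[OF t] True by blast
    next
      case False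
      then show ?thesis using s t by (simp add: permutes_not_in)
    qed
  qed
qed

end

lemma esg_intro:
  fixes G :: "('a, 'b) monoid_scheme"
  assumes "extraspecial2 G r z" and "symmetric_basis G r z g"
  shows "esg G {1..2*r} z g r"
proof -
  have grp: "group G" and fin: "finite (carrier G)" and ord: "order G = 2 ^ (2 * r + 1)"
    and zc: "z \<in> carrier G" and zn: "z \<noteq> \<one>\<^bsub>G\<^esub>" and cen: "gcenter G = {\<one>\<^bsub>G\<^esub>, z}"
    using assms(1) by (auto simp: extraspecial2_def)
  interpret group G by (rule grp)
  have zcent: "\<And>x. x \<in> carrier G \<Longrightarrow> z \<otimes>\<^bsub>G\<^esub> x = x \<otimes>\<^bsub>G\<^esub> z"
    using cen by (auto simp: gcenter_def set_eq_iff)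
  have "z \<otimes>\<^bsub>G\<^esub> z \<in> gcenter G"
  proof -
    have "\<And>y. y \<in> carrier G \<Longrightarrow> (z \<otimes>\<^bsub>G\<^esub> z) \<otimes>\<^bsub>G\<^esub> y = y \<otimes>\<^bsub>G\<^esub> (z \<otimes>\<^bsub>G\<^esub> z)"
    proof -
      fix y assume y: "y \<in> carrier G"
      have "(z \<otimes>\<^bsub>G\<^esub> z) \<otimes>\<^bsub>G\<^esub> y = z \<otimes>\<^bsub>G\<^esub> (z \<otimes>\<^bsub>G\<^esub> y)" using y zc by (simp add: m_assoc)
      also have "\<dots> = z \<otimes>\<^bsub>G\<^esub> (y \<otimes>\<^bsub>G\<^esub> z)" using zcent[OF y] by simp
      also have "\<dots> = (z \<otimes>\<^bsub>G\<^esub> y) \<otimes>\<^bsub>G\<^esub> z" using y zc by (simp add: m_assoc)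
      also have "\<dots> = (y \<otimes>\<^bsub>G\<^esub> z) \<otimes>\<^bsub>G\<^esub> z" using zcent[OF y] by simp
      also have "\<dots> = y \<otimes>\<^bsub>G\<^esub> (z \<otimes>\<^bsub>G\<^esub> z)" using y zc by (simp add: m_assoc)
      finally show "(z \<otimes>\<^bsub>G\<^esub> z) \<otimes>\<^bsub>G\<^esub> y = y \<otimes>\<^bsub>G\<^esub> (z \<otimes>\<^bsub>G\<^esub> z)" .
    qed
    then show ?thesis unfolding gcenter_def using zc by simp
  qed
  then have "z \<otimes>\<^bsub>G\<^esub> z = \<one>\<^bsub>G\<^esub> \<or> z \<otimes>\<^bsub>G\<^esub> z = z" using cen by auto
  moreover have "z \<otimes>\<^bsub>G\<^esub> z \<noteq> z"
  proof
    assume "z \<otimes>\<^bsub>G\<^esub> z = z"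
    then have "z \<otimes>\<^bsub>G\<^esub> z = z \<otimes>\<^bsub>G\<^esub> \<one>\<^bsub>G\<^esub>" using zc by simp
    then have "z = \<one>\<^bsub>G\<^esub>" using zc by (simp add: l_cancel)
    then show False using zn by simp
  qed
  ultimately have zz: "z \<otimes>\<^bsub>G\<^esub> z = \<one>\<^bsub>G\<^esub>" by blast
  have sb: "(\<forall>i \<in> {1..2*r}. g i \<in> carrier G \<and> g i \<otimes>\<^bsub>G\<^esub> g i = \<one>\<^bsub>G\<^esub>)
     \<and> (\<forall>i \<in> {1..2*r}. \<forall>j \<in> {1..2*r}. i \<noteq> j \<longrightarrow> g i \<otimes>\<^bsub>G\<^esub> g j = g j \<otimes>\<^bsub>G\<^esub> g i \<otimes>\<^bsub>G\<^esub> z)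
     \<and> (\<forall>S \<subseteq> {1..2*r}. gword G z g 0 (sorted_list_of_set S) \<in> {\<one>\<^bsub>G\<^esub>, z} \<longrightarrow> S = {})"
    using assms(2) unfolding symmetric_basis_def by blast
  have gc: "\<And>a. a \<in> {1..2*r} \<Longrightarrow> g a \<in> carrier G" using sb by blast
  have ggf: "\<And>a. a \<in> {1..2*r} \<Longrightarrow> g a \<otimes>\<^bsub>G\<^esub> g a = \<one>\<^bsub>G\<^esub>" using sb by blast
  have gcm: "\<And>a b. a \<in> {1..2*r} \<Longrightarrow> b \<in> {1..2*r} \<Longrightarrow> a \<noteq> b \<Longrightarrow>
      g a \<otimes>\<^bsub>G\<^esub> g b = g b \<otimes>\<^bsub>G\<^esub> g a \<otimes>\<^bsub>G\<^esub> z" using sb by blast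
  have ind: "\<And>S. S \<subseteq> {1..2*r} \<Longrightarrow> gword G z g 0 (sorted_list_of_set S) \<in> {\<one>\<^bsub>G\<^esub>, z} \<Longrightarrow> S = {}"
    using sb by blast
  have "card (carrier G) = 2 ^ (2 * r + 1)" using ord by (simp add: order_def)
  then have crd: "card (carrier G) = 2 * 2 ^ card {1..2*r}" by simp
  have fR: "finite {1..2*r}" by simp
  show ?thesis
    unfolding esg_def esg_axioms_def
    apply (intro conjI allI impI)
    using grp fR zc zn zcent zz gc ggf gcm ind crd fin by blast+
qed


theorem theorem4p1:
  fixes G :: "('a, 'b) monoid_scheme" and r :: nat and z :: 'a and g :: "nat \<Rightarrow> 'a"
  assumes "r \<ge> 1"
    and "extraspecial2 G r z"
    and "symmetric_basis G r z g"
  shows "(\<forall>x \<in> carrier G - {\<one>\<^bsub>G\<^esub>, z}. \<exists>!p. fst p \<in> {0,1} \<and> snd p \<subseteq> {1..2*r}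
            \<and> x = gword G z g (fst p) (sorted_list_of_set (snd p)))
     \<and> (\<forall>\<sigma>. \<sigma> permutes {1..2*r} \<longrightarrow> tilde G r z g \<sigma> \<in> auto G)
     \<and> tilde G r z g \<in> hom (sym_group (2*r)) (AutoGroup G)
     \<and> inj_on (tilde G r z g) (carrier (sym_group (2*r)))
     \<and> (\<forall>\<sigma>. \<sigma> permutes {1..2*r} \<longrightarrow> (\<forall>i \<in> {1..2*r}. tilde G r z g \<sigma> (g i) = g (\<sigma> i)))"
proof -
  interpret E: esg G "{1..2*r}" z g r using esg_intro[OF assms(2,3)] .
  have 1: "\<forall>x \<in> carrier G - {\<one>\<^bsub>G\<^esub>, z}. \<exists>!p. fst p \<in> {0,1} \<and> snd p \<subseteq> {1..2*r}
            \<and> x = gword G z g (fst p) (sorted_list_of_set (snd p))"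
    using E.nf_unique by simp
  have 2: "\<forall>\<sigma>. \<sigma> permutes {1..2*r} \<longrightarrow> tilde G r z g \<sigma> \<in> auto G"
    using E.tilde_auto by simp
  have 3: "\<forall>\<sigma>. \<sigma> permutes {1..2*r} \<longrightarrow> (\<forall>i \<in> {1..2*r}. tilde G r z g \<sigma> (g i) = g (\<sigma> i))"
    using E.tilde_g by simp
  show ?thesis using 1 2 3 E.tilde_hom E.tilde_inj by blast
qed

end
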